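(* Let $M$ be a finite set and $q,\eta\in\Delta M$. Then $q$ can be induced from $\eta$ if and only if (1) $\mathrm{supp}(\eta)\subseteq\mathrm{supp}(q)$, and (2) $\mathbb{E}_\eta[\log q]=\mathbb{E}_q[\log q]$, i.e. $\sum_m\eta_m\log q_m=\sum_m q_m\log q_m$.
   Context: A belief $q\in\Delta M$ can be induced from $\eta\in\Delta M$ if there exists a set $\mathcal{F}\subseteq\{f:M\to\mathbb{R}\}$ such that $q$ is the unique maximizer of the Shannon entropy $\mathcal{H}(q')=-\sum_mq'_m\log q'_m$ over $\Delta_{\mathcal{D}}=\{q'\in\Delta M:\sum_mq'_mf(m)=\sum_m\eta_mf(m)\ \forall f\in\mathcal{F}\}$. Convention $0\log0=0$; sums are over the support where terms are otherwise undefined. *)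

theory Defs
  imports Main "HOL-Analysis.Analysis"
begin

definition beliefs :: "('m::finite \<Rightarrow> real) set" where
  "beliefs = {q. (\<forall>m. 0 \<le> q m) \<and> (\<Sum>m\<in>UNIV. q m) = 1}"

definition bsupp :: "('m::finite \<Rightarrow> real) \<Rightarrow> 'm set" where
  "bsupp q = {m. q m \<noteq> 0}"

text \<open>Shannon entropy, with the convention 0 log 0 = 0 (sum over the support).\<close>
definition entropy :: "('m::finite \<Rightarrow> real) \<Rightarrow> real" where
  "entropy q = - (\<Sum>m\<in>bsupp q. q m * ln (q m))"

definition feasible :: "('m::finite \<Rightarrow> real) set \<Rightarrow> ('m \<Rightarrow> real) \<Rightarrow> ('m \<Rightarrow> real) set" where
  "feasible F \<eta> = {q' \<in> beliefs. \<forall>f\<in>F. (\<Sum>m\<in>UNIV. q' m * f m) = (\<Sum>m\<in>UNIV. \<eta> m * f m)}"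

definition can_be_induced :: "('m::finite \<Rightarrow> real) \<Rightarrow> ('m \<Rightarrow> real) \<Rightarrow> bool" where
  "can_be_induced q \<eta> \<longleftrightarrow>
     (\<exists>F. q \<in> feasible F \<eta> \<and> (\<forall>q'\<in>feasible F \<eta>. q' \<noteq> q \<longrightarrow> entropy q' < entropy q))"

end

theory Submission
  imports Defs
begin

lemma ln_strict: fixes x :: real assumes "0 < x" "x \<noteq> 1" shows "ln x < x - 1"
proof -
  have s: "0 < sqrt x" using assms by simp
  have s1: "sqrt x \<noteq> 1" using assms by simp
  have "ln (sqrt x) \<le> sqrt x - 1" using s by (rule ln_le_minus_one)
  moreover have "ln (sqrt x) = ln x / 2" using assms by (simp add: ln_sqrt)
  moreover have "0 < (sqrt x - 1)^2" using s1 by simp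
  moreover have "(sqrt x - 1)^2 = x - 2 * sqrt x + 1" using assms
    by (simp add: power2_diff)
  ultimately show ?thesis by linarith
qed

lemma tangent:
  fixes a b :: real assumes "0 < a" "0 \<le> b"
  shows "b * ln a + b - a \<le> b * ln b"
proof (cases "b = 0")
  case True thus ?thesis using assms by simp
next
  case False
  hence b: "0 < b" using assms by simp
  have "ln (a/b) \<le> a/b - 1" using assms b by (intro ln_le_minus_one) simp
  hence "b * ln (a/b) \<le> b*(a/b - 1)" using b by (simp add: mult_left_mono)
  thus ?thesis using assms b by (simp add: ln_div algebra_simps)
qed

lemma tangent_strict:
  fixes a b :: real assumes "0 < a" "0 \<le> b" "b \<noteq> a"
  shows "b * ln a + b - a < b * ln b"
proof (cases "b = 0")
  case True thus ?thesis using assms by simp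
next
  case False
  hence b: "0 < b" using assms by simp
  have "a / b \<noteq> 1" using assms b by simp
  hence "ln (a/b) < a/b - 1" using assms b by (intro ln_strict) simp_all
  hence "b * ln (a/b) < b*(a/b - 1)" using b by (simp add: mult_strict_left_mono)
  thus ?thesis using assms b by (simp add: ln_div algebra_simps)
qed

lemma tangent0:
  fixes a b :: real assumes "(0 < a \<and> 0 \<le> b) \<or> (a = 0 \<and> b = 0)"
  shows "b * ln a + b - a \<le> b * ln b"
  using assms tangent by auto

lemma sum_supp: "(\<Sum>m\<in>bsupp p. p m * g m) = (\<Sum>m\<in>UNIV. p m * (g m :: real))"
  for p :: "'m::finite \<Rightarrow> real"
  unfolding bsupp_def by (intro sum.mono_neutral_left) auto

lemma entropy_UNIV: "entropy q = - (\<Sum>m\<in>UNIV. q m * ln (q m))"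
  unfolding entropy_def by (simp add: sum_supp)

theorem lemma2:
  fixes q \<eta> :: "'m::finite \<Rightarrow> real"
  assumes "q \<in> beliefs" and "\<eta> \<in> beliefs"
  shows "can_be_induced q \<eta> \<longleftrightarrow>
           bsupp \<eta> \<subseteq> bsupp q \<and>
           (\<Sum>m\<in>bsupp \<eta>. \<eta> m * ln (q m)) = (\<Sum>m\<in>bsupp q. q m * ln (q m))"
proof -
  have q0: "\<forall>m. 0 \<le> q m" and q1: "(\<Sum>m\<in>UNIV. q m) = 1" using assms(1) by (auto simp: beliefs_def)
  have e0: "\<forall>m. 0 \<le> \<eta> m" and e1: "(\<Sum>m\<in>UNIV. \<eta> m) = 1" using assms(2) by (auto simp: beliefs_def)
  show ?thesis unfolding sum_supp
  proof
    assume "can_be_induced q \<eta>"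
    then obtain F where qF: "q \<in> feasible F \<eta>"
      and mx: "\<forall>q'\<in>feasible F \<eta>. q' \<noteq> q \<longrightarrow> entropy q' < entropy q"
      unfolding can_be_induced_def by blast
    have Fq: "\<forall>f\<in>F. (\<Sum>m\<in>UNIV. q m * f m) = (\<Sum>m\<in>UNIV. \<eta> m * f m)" using qF by (simp add: feasible_def)
    define qt where "qt = (\<lambda>t::real. \<lambda>m. (1-t)*q m + t*\<eta> m)"
    have key: "0 \<le> t * (\<Sum>m\<in>UNIV. (\<eta> m - q m) * ln (qt t m))"
      if P: "\<forall>m. 0 \<le> qt t m \<and> (qt t m = 0 \<longrightarrow> q m = 0)" for t
    proof -
      have sum1: "(\<Sum>m\<in>UNIV. qt t m) = 1" unfolding qt_def using q1 e1
        by (simp add: sum.distrib flip: sum_distrib_left)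
      have "qt t \<in> beliefs" using P sum1 by (simp add: beliefs_def)
      moreover have "\<forall>f\<in>F. (\<Sum>m\<in>UNIV. qt t m * f m) = (\<Sum>m\<in>UNIV. \<eta> m * f m)"
      proof
        fix f assume fF: "f \<in> F"
        have "(\<Sum>m\<in>UNIV. qt t m * f m) = (1-t) * (\<Sum>m\<in>UNIV. q m * f m) + t * (\<Sum>m\<in>UNIV. \<eta> m * f m)"
        proof -
          have "(\<Sum>m\<in>UNIV. qt t m * f m) = (\<Sum>m\<in>UNIV. (1-t) * (q m * f m) + t * (\<eta> m * f m))"
            by (rule sum.cong) (auto simp: qt_def algebra_simps)
          thus ?thesis by (simp add: sum.distrib sum_distrib_left)
        qed
        also have "\<dots> = (\<Sum>m\<in>UNIV. \<eta> m * f m)" using Fq fF by (simp add: algebra_simps)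
        finally show "(\<Sum>m\<in>UNIV. qt t m * f m) = (\<Sum>m\<in>UNIV. \<eta> m * f m)" .
      qed
      ultimately have "qt t \<in> feasible F \<eta>" by (simp add: feasible_def)
      hence "entropy (qt t) \<le> entropy q" using mx by (cases "qt t = q") (auto intro: less_imp_le)
      hence A: "(\<Sum>m\<in>UNIV. q m * ln (q m)) \<le> (\<Sum>m\<in>UNIV. qt t m * ln (qt t m))" by (simp add: entropy_UNIV)
      have B: "(\<Sum>m\<in>UNIV. q m * ln (qt t m) + q m - qt t m) \<le> (\<Sum>m\<in>UNIV. q m * ln (q m))"
      proof (rule sum_mono)
        fix m
        have "(0 < qt t m \<and> 0 \<le> q m) \<or> (qt t m = 0 \<and> q m = 0)" using P q0
          by (metis order_le_less)
        thus "q m * ln (qt t m) + q m - qt t m \<le> q m * ln (q m)" by (rule tangent0)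
      qed
      have C: "(\<Sum>m\<in>UNIV. q m * ln (qt t m) + q m - qt t m) = (\<Sum>m\<in>UNIV. q m * ln (qt t m))"
        using q1 sum1 by (simp add: sum.distrib sum_subtractf)
      have "(\<Sum>m\<in>UNIV. qt t m * ln (qt t m)) - (\<Sum>m\<in>UNIV. q m * ln (qt t m))
          = (\<Sum>m\<in>UNIV. qt t m * ln (qt t m) - q m * ln (qt t m))" by (simp add: sum_subtractf)
      also have "\<dots> = (\<Sum>m\<in>UNIV. t * ((\<eta> m - q m) * ln (qt t m)))"
        by (rule sum.cong) (auto simp: qt_def algebra_simps)
      also have "\<dots> = t * (\<Sum>m\<in>UNIV. (\<eta> m - q m) * ln (qt t m))" by (simp add: sum_distrib_left)
      finally have E: "(\<Sum>m\<in>UNIV. qt t m * ln (qt t m)) - (\<Sum>m\<in>UNIV. q m * ln (qt t m))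
          = t * (\<Sum>m\<in>UNIV. (\<eta> m - q m) * ln (qt t m))" .
      from A B C E show ?thesis by linarith
    qed
    have qtlim: "((\<lambda>t. qt t m) \<longlongrightarrow> q m) F'" if "F' \<le> at 0" for m F'
    proof -
      have "((\<lambda>t. (1-t)*q m + t*\<eta> m) \<longlongrightarrow> (1-0)*q m + 0*\<eta> m) (at (0::real))"
        by (intro tendsto_intros)
      hence "((\<lambda>t. qt t m) \<longlongrightarrow> q m) (at 0)" by (simp add: qt_def)
      thus ?thesis using that by (rule tendsto_mono[rotated])
    qed
    have supp: "bsupp \<eta> \<subseteq> bsupp q"
    proof (rule ccontr)
      assume ns: "\<not> bsupp \<eta> \<subseteq> bsupp q"
      define T where "T = {m. q m = 0 \<and> \<eta> m \<noteq> 0}"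
      have Tne: "T \<noteq> {}" using ns by (auto simp: bsupp_def T_def)
      have Tpos: "\<And>m. m \<in> T \<Longrightarrow> 0 < \<eta> m" using e0 by (auto simp: T_def order_le_less)
      define c where "c = (\<Sum>m\<in>T. \<eta> m)"
      define d where "d = (\<Sum>m\<in>T. \<eta> m * ln (\<eta> m))"
      have c: "0 < c" unfolding c_def using Tne Tpos by (intro sum_pos) auto
      define g where "g t = (\<Sum>m\<in>-T. (\<eta> m - q m) * ln (qt t m))" for t
      have glim: "(g \<longlongrightarrow> (\<Sum>m\<in>-T. (\<eta> m - q m) * ln (q m))) (at_right 0)"
        unfolding g_def
      proof (intro tendsto_sum)
        fix m assume mT: "m \<in> -T"
        show "((\<lambda>t. (\<eta> m - q m) * ln (qt t m)) \<longlongrightarrow> (\<eta> m - q m) * ln (q m)) (at_right 0)"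
        proof (cases "q m = 0")
          case True
          then have "\<eta> m = 0" using mT by (simp add: T_def)
          then show ?thesis using True by simp
        next
          case False
          have "((\<lambda>t. qt t m) \<longlongrightarrow> q m) (at_right 0)" by (rule qtlim) (simp add: at_le)
          then show ?thesis using False by (intro tendsto_intros) auto
        qed
      qed
      have hl: "filterlim (\<lambda>t. c * ln t + d) at_bot (at_right 0)"
      proof -
        have "filterlim (\<lambda>t. c * ln t) at_bot (at_right (0::real))"
          by (rule filterlim_tendsto_pos_mult_at_bot[OF tendsto_const c ln_at_0])
        hence "filterlim (\<lambda>t. d + c * ln t) at_bot (at_right (0::real))"
          using filterlim_tendsto_add_at_bot_iff[OF tendsto_const[of d], where g="\<lambda>t. c * ln t"]
          by simp
        moreover have "(\<lambda>t. c * ln t + d) = (\<lambda>t. d + c * ln t)" by (auto simp: fun_eq_iff)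
        ultimately show ?thesis by simp
      qed
      have heq: "\<forall>\<^sub>F t in at_right 0. (\<Sum>m\<in>UNIV. (\<eta> m - q m) * ln (qt t m)) = g t + (c * ln t + d)"
        using eventually_at_right_less[of "0::real"]
      proof eventually_elim
        case (elim t)
        have "(\<Sum>m\<in>UNIV. (\<eta> m - q m) * ln (qt t m)) = (\<Sum>m\<in>UNIV - T. (\<eta> m - q m) * ln (qt t m))
            + (\<Sum>m\<in>T. (\<eta> m - q m) * ln (qt t m))" by (rule sum.subset_diff) auto
        also have "(\<Sum>m\<in>T. (\<eta> m - q m) * ln (qt t m)) = (\<Sum>m\<in>T. \<eta> m * ln t + \<eta> m * ln (\<eta> m))"
        proof (rule sum.cong)
          fix m assume "m \<in> T"
          hence "q m = 0" "0 < \<eta> m" using Tpos by (auto simp: T_def)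
          thus "(\<eta> m - q m) * ln (qt t m) = \<eta> m * ln t + \<eta> m * ln (\<eta> m)"
            using elim by (simp add: qt_def ln_mult algebra_simps)
        qed simp
        also have "\<dots> = c * ln t + d" unfolding c_def d_def by (simp add: sum.distrib sum_distrib_right)
        finally show ?case by (simp add: g_def Compl_eq_Diff_UNIV)
      qed
      have bot: "filterlim (\<lambda>t. (\<Sum>m\<in>UNIV. (\<eta> m - q m) * ln (qt t m))) at_bot (at_right 0)"
      proof -
        have "filterlim (\<lambda>t. g t + (c * ln t + d)) at_bot (at_right 0)"
          using filterlim_tendsto_add_at_bot_iff[OF glim] hl by simp
        thus ?thesis using heq by (simp add: filterlim_cong[OF refl refl])
      qed
      have ev1: "\<forall>\<^sub>F t in at_right 0. (\<Sum>m\<in>UNIV. (\<eta> m - q m) * ln (qt t m)) \<le> -1"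
        using bot by (simp add: filterlim_at_bot)
      have ev2: "\<forall>\<^sub>F t in at_right 0. 0 \<le> (\<Sum>m\<in>UNIV. (\<eta> m - q m) * ln (qt t m))"
        using eventually_at_right_real[OF zero_less_one[where 'a=real]]
      proof eventually_elim
        case (elim t)
        have P: "\<forall>m. 0 \<le> qt t m \<and> (qt t m = 0 \<longrightarrow> q m = 0)"
        proof
          fix m
          have "0 \<le> (1-t)*q m" "0 \<le> t * \<eta> m" using elim q0 e0 by auto
          moreover have "(1-t)*q m = 0 \<Longrightarrow> q m = 0" using elim by auto
          moreover have "qt t m = (1-t)*q m + t*\<eta> m" by (simp add: qt_def)
          ultimately show "0 \<le> qt t m \<and> (qt t m = 0 \<longrightarrow> q m = 0)"
            by (metis add_nonneg_eq_0_iff add_nonneg_nonneg)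
        qed
        have "0 \<le> t * (\<Sum>m\<in>UNIV. (\<eta> m - q m) * ln (qt t m))" by (rule key[OF P])
        thus ?case using elim by (simp add: zero_le_mult_iff)
      qed
      have "\<forall>\<^sub>F t in at_right (0::real). False" using ev1 ev2 by eventually_elim simp
      thus False by simp
    qed
    have zq: "\<And>m. q m = 0 \<Longrightarrow> \<eta> m = 0" using supp by (auto simp: bsupp_def)
    define D where "D = (\<Sum>m\<in>UNIV. (\<eta> m - q m) * ln (q m))"
    have lim: "((\<lambda>t. \<Sum>m\<in>UNIV. (\<eta> m - q m) * ln (qt t m)) \<longlongrightarrow> D) F'" if "F' \<le> at 0" for F'
      unfolding D_def
    proof (intro tendsto_sum)
      fix m
      show "((\<lambda>t. (\<eta> m - q m) * ln (qt t m)) \<longlongrightarrow> (\<eta> m - q m) * ln (q m)) F'"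
      proof (cases "q m = 0")
        case True
        then show ?thesis using zq[OF True] by simp
      next
        case False
        have "((\<lambda>t. qt t m) \<longlongrightarrow> q m) F'" by (rule qtlim[OF that])
        then show ?thesis using False by (intro tendsto_intros) auto
      qed
    qed
    have evm: "\<forall>\<^sub>F t in at 0. \<forall>m. 0 \<le> qt t m \<and> (qt t m = 0 \<longrightarrow> q m = 0)"
    proof (rule eventually_all_finite)
      fix m
      show "\<forall>\<^sub>F t in at 0. 0 \<le> qt t m \<and> (qt t m = 0 \<longrightarrow> q m = 0)"
      proof (cases "q m = 0")
        case True
        then show ?thesis using zq[OF True] by (simp add: qt_def)
      next
        case False
        hence "0 < q m" using q0 by (metis order_le_less)
        hence "\<forall>\<^sub>F t in at 0. 0 < qt t m" using qtlim[of "at 0" m] order_tendstoD(1) by blast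
        thus ?thesis by eventually_elim auto
      qed
    qed
    have "0 \<le> D"
    proof (rule tendsto_lowerbound[OF lim])
      show "at_right (0::real) \<le> at 0" by (simp add: at_le)
      have "\<forall>\<^sub>F t in at_right 0. \<forall>m. 0 \<le> qt t m \<and> (qt t m = 0 \<longrightarrow> q m = 0)"
        using evm by (rule filter_leD[rotated]) (simp add: at_le)
      thus "\<forall>\<^sub>F t in at_right 0. 0 \<le> (\<Sum>m\<in>UNIV. (\<eta> m - q m) * ln (qt t m))"
        using eventually_at_right_less[of "0::real"]
      proof eventually_elim
        case (elim t)
        thus ?case using key[of t] by (simp add: zero_le_mult_iff)
      qed
    qed simp
    moreover have "D \<le> 0"
    proof (rule tendsto_upperbound[OF lim])
      show "at_left (0::real) \<le> at 0" by (simp add: at_le)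
      have P: "\<forall>\<^sub>F t in at_left 0. \<forall>m. 0 \<le> qt t m \<and> (qt t m = 0 \<longrightarrow> q m = 0)"
        using evm by (rule filter_leD[rotated]) (simp add: at_le)
      have "\<forall>\<^sub>F t in at_left 0. t \<in> {-1<..<0::real}" by (rule eventually_at_left_real) simp
      then show "\<forall>\<^sub>F t in at_left 0. 0 \<ge> (\<Sum>m\<in>UNIV. (\<eta> m - q m) * ln (qt t m))"
        using P
      proof eventually_elim
        case (elim t)
        thus ?case using key[of t] by (simp add: zero_le_mult_iff)
      qed
    qed simp
    ultimately have "D = 0" by simp
    hence "(\<Sum>m\<in>UNIV. \<eta> m * ln (q m)) - (\<Sum>m\<in>UNIV. q m * ln (q m)) = 0"
      unfolding D_def by (simp add: sum_subtractf left_diff_distrib)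
    thus "bsupp \<eta> \<subseteq> bsupp q \<and> (\<Sum>m\<in>UNIV. \<eta> m * ln (q m)) = (\<Sum>m\<in>UNIV. q m * ln (q m))"
      using supp by simp
  next
    assume H: "bsupp \<eta> \<subseteq> bsupp q \<and> (\<Sum>m\<in>UNIV. \<eta> m * ln (q m)) = (\<Sum>m\<in>UNIV. q m * ln (q m))"
    define f1 where "f1 = (\<lambda>m. ln (q m))"
    define f2 where "f2 = (\<lambda>m. if q m = 0 then 1 else (0::real))"
    have zq: "\<And>m. q m = 0 \<Longrightarrow> \<eta> m = 0" using H by (auto simp: bsupp_def)
    have qf2: "(\<Sum>m\<in>UNIV. q m * f2 m) = 0" by (intro sum.neutral) (auto simp: f2_def)
    have ef2: "(\<Sum>m\<in>UNIV. \<eta> m * f2 m) = 0" by (intro sum.neutral) (auto simp: f2_def zq)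
    show "can_be_induced q \<eta>" unfolding can_be_induced_def
    proof (intro exI[of _ "{f1,f2}"] conjI ballI impI)
      show "q \<in> feasible {f1, f2} \<eta>" using assms(1) H qf2 ef2
        by (simp add: feasible_def f1_def)
      fix q' assume q'F: "q' \<in> feasible {f1, f2} \<eta>" and ne: "q' \<noteq> q"
      have q'0: "\<forall>m. 0 \<le> q' m" and q'1: "(\<Sum>m\<in>UNIV. q' m) = 1"
        and q'l: "(\<Sum>m\<in>UNIV. q' m * ln (q m)) = (\<Sum>m\<in>UNIV. \<eta> m * ln (q m))"
        and q'2: "(\<Sum>m\<in>UNIV. q' m * f2 m) = (\<Sum>m\<in>UNIV. \<eta> m * f2 m)"
        using q'F by (auto simp: feasible_def beliefs_def f1_def)
      have "\<forall>m\<in>UNIV. q' m * f2 m = 0"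
        using q'2 ef2 q'0 by (subst sum_nonneg_eq_0_iff[symmetric]) (auto simp: f2_def)
      hence zq': "\<And>m. q m = 0 \<Longrightarrow> q' m = 0" by (auto simp: f2_def)
      have cond: "\<And>m. (0 < q m \<and> 0 \<le> q' m) \<or> (q m = 0 \<and> q' m = 0)"
        using q0 q'0 zq' by (metis order_le_less)
      obtain m0 where m0: "q' m0 \<noteq> q m0" using ne by auto
      have "q m0 \<noteq> 0" using m0 zq' by auto
      hence "0 < q m0" using q0 by (metis order_le_less)
      have "(\<Sum>m\<in>UNIV. q' m * ln (q m) + q' m - q m) < (\<Sum>m\<in>UNIV. q' m * ln (q' m))"
      proof (rule sum_strict_mono_ex1)
        show "\<forall>m\<in>UNIV. q' m * ln (q m) + q' m - q m \<le> q' m * ln (q' m)"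
          using cond tangent0 by blast
        show "\<exists>m\<in>UNIV. q' m * ln (q m) + q' m - q m < q' m * ln (q' m)"
          using tangent_strict[OF \<open>0 < q m0\<close> _ m0] q'0 by blast
      qed simp
      moreover have "(\<Sum>m\<in>UNIV. q' m * ln (q m) + q' m - q m) = (\<Sum>m\<in>UNIV. q' m * ln (q m))"
        using q1 q'1 by (simp add: sum.distrib sum_subtractf)
      ultimately show "entropy q' < entropy q" using q'l H by (simp add: entropy_UNIV)
    qed
  qed
qed

end
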